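(* Let $P$ be a pmf on a finite set $\mathcal{X}$ with $P(x)>0$ for all $x$, and for $(z,Q)\in\mathcal{G}$ let $$c_P(z,Q)=\sum_{x\in\mathcal{X}}g_{z,Q,P}(x)\log_2\frac{\sum_{x'}g_{z,Q,P}(x')}{g_{z,Q,P}(x)}\quad(0\log(a/0)=0).$$ Then on $\mathcal{G}$, $c_P(z,Q)$ is concave in $Q$ for each fixed $z$ and concave in $z$ for each fixed $Q$.
   Context: $g_{z,Q,P}(x)=\big(1-\frac{z^2}{2}\big)P(x)+z\sqrt{Q(x)P(x)}$. $\mathcal{G}=\{(z,Q): z\ge0,\ Q \text{ a pmf on }\mathcal{X},\ g_{z,Q,P}(x)\ge0\ \forall x\in\mathcal{X}\}$ (for fixed $z$, resp. fixed $Q$, the corresponding section of $\mathcal{G}$ is convex). *)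

theory Defs
  imports "HOL-Analysis.Analysis"
begin

text \<open>The finite alphabet X is a finite type 'n; a (probability mass) function on X is a
  vector in real^'n, the entry at x being its value at x.\<close>

definition is_pmf :: "real^'n::finite \<Rightarrow> bool" where
  "is_pmf Q \<longleftrightarrow> (\<forall>x. Q $ x \<ge> 0) \<and> (\<Sum>x\<in>UNIV. Q $ x) = 1"

definition gfun :: "real \<Rightarrow> real^'n::finite \<Rightarrow> real^'n \<Rightarrow> 'n \<Rightarrow> real" where
  "gfun z Q P x = (1 - z^2 / 2) * P $ x + z * sqrt (Q $ x * P $ x)"

definition Gset :: "real^'n::finite \<Rightarrow> (real \<times> (real^'n)) set" where
  "Gset P = {(z, Q) | z Q. z \<ge> 0 \<and> is_pmf Q \<and> (\<forall>x. gfun z Q P x \<ge> 0)}"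

definition cP :: "real^'n::finite \<Rightarrow> real \<Rightarrow> real^'n \<Rightarrow> real" where
  "cP P z Q = (\<Sum>x\<in>UNIV. (if gfun z Q P x = 0 then 0
      else gfun z Q P x * log 2 ((\<Sum>x'\<in>UNIV. gfun z Q P x') / gfun z Q P x)))"

end

theory Submission
  imports Defs
begin

definition Ent :: "('n::finite \<Rightarrow> real) \<Rightarrow> real" where
  "Ent a = (\<Sum>x\<in>UNIV. a x * ln ((\<Sum>y\<in>UNIV. a y) / a x))"

definition Crs :: "('n::finite \<Rightarrow> real) \<Rightarrow> ('n \<Rightarrow> real) \<Rightarrow> real" where
  "Crs a r = (\<Sum>x\<in>UNIV. a x * ln (1 / r x))"

lemma term_bound:
  fixes a r S :: real
  assumes "a \<ge> 0" "r \<ge> 0" "a > 0 \<Longrightarrow> r > 0" "S \<ge> a"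
  shows "a * ln (S / a) \<le> a * ln (1 / r) + S * r - a"
proof (cases "a = 0")
  case True thus ?thesis using assms by simp
next
  case False
  hence a: "a > 0" using assms by simp
  hence r: "r > 0" using assms by simp
  have S: "S > 0" using a assms by simp
  have "ln (S / a) = ln (1 / r) + ln (S * r / a)"
    using a r S by (simp add: ln_div ln_mult)
  moreover have "ln (S * r / a) \<le> S * r / a - 1"
    by (rule ln_le_minus_one) (use a r S in simp)
  ultimately have "a * ln (S / a) \<le> a * ln (1 / r) + a * (S * r / a - 1)"
    using a by (simp add: distrib_left)
  also have "a * (S * r / a - 1) = S * r - a" using a by (simp add: field_simps)
  finally show ?thesis by simp
qed

lemma gibbs:
  fixes a r :: "'n::finite \<Rightarrow> real"
  assumes "\<And>x. a x \<ge> 0" "\<And>x. r x \<ge> 0" "\<And>x. a x > 0 \<Longrightarrow> r x > 0" "(\<Sum>x\<in>UNIV. r x) \<le> 1"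
  shows "Ent a \<le> Crs a r"
proof -
  let ?S = "\<Sum>y\<in>UNIV. a y"
  have Sa: "a x \<le> ?S" for x
    by (rule member_le_sum) (use assms in auto)
  have "Ent a \<le> (\<Sum>x\<in>UNIV. a x * ln (1 / r x) + ?S * r x - a x)"
    unfolding Ent_def by (rule sum_mono, rule term_bound) (use assms Sa in auto)
  also have "\<dots> = Crs a r + ?S * (\<Sum>x\<in>UNIV. r x) - ?S"
    by (simp add: Crs_def sum.distrib sum_subtractf sum_distrib_left)
  also have "\<dots> \<le> Crs a r"
  proof -
    have "?S \<ge> 0" by (rule sum_nonneg) (use assms in auto)
    hence "?S * (\<Sum>x\<in>UNIV. r x) \<le> ?S" using assms(4) by (simp add: mult_left_le)
    thus ?thesis by simp
  qed
  finally show ?thesis .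
qed

lemma ent_concave:
  fixes a b c :: "'n::finite \<Rightarrow> real"
  assumes a: "\<And>x. a x \<ge> 0" and b: "\<And>x. b x \<ge> 0" and c: "\<And>x. c x \<ge> u * a x + v * b x"
    and u: "u \<ge> 0" and v: "v \<ge> 0"
  shows "u * Ent a + v * Ent b \<le> Ent c"
proof -
  let ?S = "\<Sum>y\<in>UNIV. c y"
  have c0: "c x \<ge> 0" for x using c[of x] a[of x] b[of x] u v
    by (smt (verit) mult_nonneg_nonneg)
  have ua0: "c x = 0 \<Longrightarrow> u * a x = 0 \<and> v * b x = 0" for x
    using c[of x] a[of x] b[of x] u v by (smt (verit) mult_nonneg_nonneg)
  show ?thesis
  proof (cases "?S = 0")
    case True
    have call: "c x = 0" for x
      using True c0 by (simp add: sum_nonneg_eq_0_iff)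
    have "u * Ent a = (\<Sum>x\<in>UNIV. (u * a x) * ln ((\<Sum>y\<in>UNIV. a y) / a x))"
      by (simp add: Ent_def sum_distrib_left mult.assoc)
    also have "\<dots> = 0"
    proof -
      have "u * a x = 0" for x using ua0 call by blast
      hence "u * a x * ln ((\<Sum>y\<in>UNIV. a y) / a x) = 0" for x by simp
      thus ?thesis by (intro sum.neutral) blast
    qed
    finally have 1: "u * Ent a = 0" .
    have "v * Ent b = (\<Sum>x\<in>UNIV. (v * b x) * ln ((\<Sum>y\<in>UNIV. b y) / b x))"
      by (simp add: Ent_def sum_distrib_left mult.assoc)
    also have "\<dots> = 0"
    proof -
      have "v * b x = 0" for x using ua0 call by blast
      hence "v * b x * ln ((\<Sum>y\<in>UNIV. b y) / b x) = 0" for x by simp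
      thus ?thesis by (intro sum.neutral) blast
    qed
    finally have 2: "v * Ent b = 0" .
    have "Ent c = 0" using call by (simp add: Ent_def)
    thus ?thesis using 1 2 by linarith
  next
    case False
    have Spos: "?S > 0" using False c0 by (simp add: sum_nonneg order_less_le)
    define r where "r x = c x / ?S" for x
    have r0: "r x \<ge> 0" for x using c0 Spos by (simp add: r_def)
    have rsum: "(\<Sum>x\<in>UNIV. r x) = 1" using Spos by (simp add: r_def flip: sum_divide_distrib)
    have cle: "c x \<le> ?S" for x by (rule member_le_sum) (use c0 in auto)
    have r1: "r x \<le> 1" for x using cle Spos by (simp add: r_def)
    have rpos: "c x > 0 \<Longrightarrow> r x > 0" for x using Spos by (simp add: r_def)
    have Ec: "Ent c = Crs c r"
      unfolding Ent_def Crs_def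
      by (rule sum.cong) (auto simp: r_def)
    have A: "u * Ent a \<le> u * Crs a r"
    proof (cases "u = 0")
      case False
      hence "u > 0" using u by simp
      hence "a x > 0 \<Longrightarrow> r x > 0" for x using rpos[of x] c[of x] b[of x] v
        by (smt (verit) mult_nonneg_nonneg mult_pos_pos)
      thus ?thesis using gibbs[of a r] a r0 rsum u by (simp add: mult_left_mono)
    qed simp
    have B: "v * Ent b \<le> v * Crs b r"
    proof (cases "v = 0")
      case False
      hence "v > 0" using v by simp
      hence "b x > 0 \<Longrightarrow> r x > 0" for x using rpos[of x] c[of x] a[of x] u
        by (smt (verit) mult_nonneg_nonneg mult_pos_pos)
      thus ?thesis using gibbs[of b r] b r0 rsum v by (simp add: mult_left_mono)
    qed simp
    have C: "u * Crs a r + v * Crs b r \<le> Crs c r"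
    proof -
      have "u * Crs a r + v * Crs b r = (\<Sum>x\<in>UNIV. (u * a x + v * b x) * ln (1 / r x))"
        by (simp add: Crs_def sum_distrib_left sum.distrib algebra_simps)
      also have "\<dots> \<le> Crs c r"
        unfolding Crs_def
      proof (rule sum_mono)
        fix x
        show "(u * a x + v * b x) * ln (1 / r x) \<le> c x * ln (1 / r x)"
        proof (cases "c x = 0")
          case True
          hence "u * a x + v * b x = 0" using ua0[of x] by (metis add.right_neutral)
          thus ?thesis using True by simp
        next
          case False
          hence "r x > 0" using rpos c0[of x] by (simp add: order_less_le)
          hence "ln (1 / r x) \<ge> 0" using r1[of x] by simp
          thus ?thesis using c[of x] by (simp add: mult_right_mono)
        qed
      qed
      finally show ?thesis .
    qed
    show ?thesis using A B C Ec by simp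
  qed
qed

lemma cP_Ent: "cP P z Q = Ent (gfun z Q P) / ln 2"
  unfolding cP_def Ent_def sum_divide_distrib
  by (rule sum.cong) (auto simp: log_def)

lemma sqrt_concave:
  fixes x y u v :: real
  assumes "x \<ge> 0" "y \<ge> 0" "u \<ge> 0" "v \<ge> 0" "u + v = 1"
  shows "u * sqrt x + v * sqrt y \<le> sqrt (u * x + v * y)"
proof -
  define s t where "s = sqrt x" and "t = sqrt y"
  have x: "x = s^2" unfolding s_def using assms(1) by simp
  have y: "y = t^2" unfolding t_def using assms(2) by simp
  have st: "s \<ge> 0" "t \<ge> 0" using assms(1,2) by (simp_all add: s_def t_def)
  have "(u * s + v * t)^2 \<le> u * s^2 + v * t^2"
  proof -
    have vv: "v = 1 - u" using assms(5) by simp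
    have "u * s^2 + v * t^2 - (u * s + v * t)^2 = u * v * (s - t)^2"
      unfolding vv by (simp add: power2_eq_square algebra_simps)
    moreover have "u * v * (s - t)^2 \<ge> 0" using assms by simp
    ultimately show ?thesis by simp
  qed
  hence "u * s + v * t \<le> sqrt (u * s^2 + v * t^2)"
    by (rule real_le_rsqrt)
  thus ?thesis using assms(1,2) by (simp add: s_def t_def)
qed


lemma gQ:
  fixes Q1 Q2 P :: "real^'n::finite"
  assumes "z \<ge> 0" "is_pmf Q1" "is_pmf Q2" "\<forall>x. P $ x > 0" "u \<ge> 0" "v \<ge> 0" "u + v = 1"
  shows "gfun z (u *\<^sub>R Q1 + v *\<^sub>R Q2) P x \<ge> u * gfun z Q1 P x + v * gfun z Q2 P x"
proof -
  have q1: "Q1 $ x \<ge> 0" and q2: "Q2 $ x \<ge> 0" using assms(2,3) by (auto simp: is_pmf_def)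
  have p: "P $ x > 0" using assms(4) by simp
  have sq: "u * sqrt (Q1 $ x * P $ x) + v * sqrt (Q2 $ x * P $ x)
      \<le> sqrt (u * (Q1 $ x * P $ x) + v * (Q2 $ x * P $ x))"
    by (rule sqrt_concave) (use q1 q2 p assms in \<open>auto intro: mult_nonneg_nonneg less_imp_le\<close>)
  have eq: "(u * Q1 $ x + v * Q2 $ x) * P $ x = u * (Q1 $ x * P $ x) + v * (Q2 $ x * P $ x)"
    by (simp add: algebra_simps)
  have "z * (u * sqrt (Q1 $ x * P $ x) + v * sqrt (Q2 $ x * P $ x))
      \<le> z * sqrt ((u * Q1 $ x + v * Q2 $ x) * P $ x)"
    unfolding eq using sq assms(1) by (rule mult_left_mono)
  moreover have "(1 - z^2/2) * P $ x = u * ((1 - z^2/2) * P $ x) + v * ((1 - z^2/2) * P $ x)"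
    using assms(7) by (metis distrib_right mult_1)
  ultimately show ?thesis unfolding gfun_def by (simp add: algebra_simps)
qed

lemma gZ:
  fixes Q P :: "real^'n::finite"
  assumes "P $ x \<ge> 0" "u \<ge> 0" "v \<ge> 0" "u + v = 1"
  shows "gfun (u * z1 + v * z2) Q P x \<ge> u * gfun z1 Q P x + v * gfun z2 Q P x"
proof -
  have vv: "v = 1 - u" using assms(4) by simp
  have d: "gfun (u * z1 + v * z2) Q P x - (u * gfun z1 Q P x + v * gfun z2 Q P x)
      = P $ x / 2 * (u * v * (z1 - z2)^2)"
    unfolding gfun_def vv power2_eq_square by (simp add: field_simps)
  have "P $ x / 2 * (u * v * (z1 - z2)^2) \<ge> 0" using assms by simp
  thus ?thesis using d by simp
qed

lemma pmf_comb:
  assumes "is_pmf Q1" "is_pmf Q2" "u \<ge> 0" "v \<ge> 0" "u + v = 1"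
  shows "is_pmf (u *\<^sub>R Q1 + v *\<^sub>R Q2)"
  using assms unfolding is_pmf_def
  by (simp add: sum.distrib flip: sum_distrib_left)

theorem mainTheorem11:
  fixes P :: "real^'n::finite"
  assumes "is_pmf P" and "\<forall>x. P $ x > 0"
  shows "(\<forall>z. concave_on {Q. (z, Q) \<in> Gset P} (\<lambda>Q. cP P z Q))
       \<and> (\<forall>Q. concave_on {z. (z, Q) \<in> Gset P} (\<lambda>z. cP P z Q))"
proof (intro conjI allI)
  fix z
  let ?S = "{Q. (z, Q) \<in> Gset P}"
  have key: "u *\<^sub>R Q1 + v *\<^sub>R Q2 \<in> ?S \<and>
      u * cP P z Q1 + v * cP P z Q2 \<le> cP P z (u *\<^sub>R Q1 + v *\<^sub>R Q2)"
    if "Q1 \<in> ?S" "Q2 \<in> ?S" "u \<ge> 0" "v \<ge> 0" "u + v = 1" for Q1 Q2 u v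
  proof -
    have z: "z \<ge> 0" and p1: "is_pmf Q1" and p2: "is_pmf Q2"
      and g1: "\<And>x. gfun z Q1 P x \<ge> 0" and g2: "\<And>x. gfun z Q2 P x \<ge> 0"
      using that by (auto simp: Gset_def)
    have c: "\<And>x. gfun z (u *\<^sub>R Q1 + v *\<^sub>R Q2) P x \<ge> u * gfun z Q1 P x + v * gfun z Q2 P x"
      by (rule gQ) (use z p1 p2 assms that in auto)
    have "\<And>x. gfun z (u *\<^sub>R Q1 + v *\<^sub>R Q2) P x \<ge> 0"
      using c g1 g2 that by (smt (verit) mult_nonneg_nonneg)
    hence mem: "u *\<^sub>R Q1 + v *\<^sub>R Q2 \<in> ?S"
      using z pmf_comb[OF p1 p2 that(3-5)] by (auto simp: Gset_def)
    have "u * Ent (gfun z Q1 P) + v * Ent (gfun z Q2 P) \<le> Ent (gfun z (u *\<^sub>R Q1 + v *\<^sub>R Q2) P)"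
      by (rule ent_concave) (use g1 g2 c that in auto)
    hence "(u * Ent (gfun z Q1 P) + v * Ent (gfun z Q2 P)) / ln 2 \<le> Ent (gfun z (u *\<^sub>R Q1 + v *\<^sub>R Q2) P) / ln 2"
      by (simp add: divide_right_mono)
    thus ?thesis using mem by (simp add: cP_Ent add_divide_distrib)
  qed
  show "concave_on ?S (\<lambda>Q. cP P z Q)"
    unfolding concave_on_iff convex_def using key by blast
next
  fix Q
  let ?S = "{z. (z, Q) \<in> Gset P}"
  have key: "u * z1 + v * z2 \<in> ?S \<and>
      u * cP P z1 Q + v * cP P z2 Q \<le> cP P (u * z1 + v * z2) Q"
    if "z1 \<in> ?S" "z2 \<in> ?S" "u \<ge> 0" "v \<ge> 0" "u + v = 1" for z1 z2 u v
  proof -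
    have z: "z1 \<ge> 0" "z2 \<ge> 0" and p: "is_pmf Q"
      and g1: "\<And>x. gfun z1 Q P x \<ge> 0" and g2: "\<And>x. gfun z2 Q P x \<ge> 0"
      using that by (auto simp: Gset_def)
    have c: "\<And>x. gfun (u * z1 + v * z2) Q P x \<ge> u * gfun z1 Q P x + v * gfun z2 Q P x"
      by (rule gZ) (use assms that in \<open>auto simp: less_imp_le\<close>)
    have "\<And>x. gfun (u * z1 + v * z2) Q P x \<ge> 0"
      using c g1 g2 that by (smt (verit) mult_nonneg_nonneg)
    moreover have "u * z1 + v * z2 \<ge> 0" using z that by simp
    ultimately have mem: "u * z1 + v * z2 \<in> ?S"
      using p by (auto simp: Gset_def)
    have "u * Ent (gfun z1 Q P) + v * Ent (gfun z2 Q P) \<le> Ent (gfun (u * z1 + v * z2) Q P)"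
      by (rule ent_concave) (use g1 g2 c that in auto)
    hence "(u * Ent (gfun z1 Q P) + v * Ent (gfun z2 Q P)) / ln 2 \<le> Ent (gfun (u * z1 + v * z2) Q P) / ln 2"
      by (simp add: divide_right_mono)
    thus ?thesis using mem by (simp add: cP_Ent add_divide_distrib)
  qed
  show "concave_on ?S (\<lambda>z. cP P z Q)"
    unfolding concave_on_iff convex_def using key by auto
qed

end
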